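(* Let $n\ge 1$ be an integer and let $M_{8n}=\langle a,b : a^4=b^{2n}=1,\ bab^{-1}=a^{-1}\rangle$ be the metacyclic group of order $8n$. Let $\Gamma_{M_{8n}}$ be its non-commuting graph. Then the spectrum of the distance signless Laplacian matrix $D^Q(\Gamma_{M_{8n}})$ (eigenvalues counted with multiplicity, multiplicities being added if two of the listed values coincide) consists of: (a) $8n-4$ with multiplicity $3(2n-1)$; (b) $10n-4$ with multiplicity $2$; (c) $16n-4$ with multiplicity $1$.
   Context: For a finite non-abelian group $G$ with centre $Z(G)$, the non-commuting graph $\Gamma_G$ is the simple undirected graph with vertex set $G\setminus Z(G)$, in which two distinct vertices $u,v$ are adjacent if and only if $uv\ne vu$. For a connected graph $H$, $d_{uv}$ denotes the length of a shortest path between $u$ and $v$; the distance matrix $D(H)$ has $(u,v)$-entry $d_{uv}$. The transmission of a vertex $v$ is $\sum_{u} d_{uv}$, and $Tr(H)$ is the diagonal matrix of vertex transmissions. The distance signless Laplacian matrix is $D^Q(H)=Tr(H)+D(H)$. *)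

theory Defs
  imports "Jordan_Normal_Form.Char_Poly"
begin

definition centre :: "'g set \<Rightarrow> ('g \<Rightarrow> 'g \<Rightarrow> 'g) \<Rightarrow> 'g set" where
  "centre G mul = {z \<in> G. \<forall>x\<in>G. mul z x = mul x z}"

definition ncg_vertices :: "'g set \<Rightarrow> ('g \<Rightarrow> 'g \<Rightarrow> 'g) \<Rightarrow> 'g set" where
  "ncg_vertices G mul = G - centre G mul"

definition ncg_adj :: "'g set \<Rightarrow> ('g \<Rightarrow> 'g \<Rightarrow> 'g) \<Rightarrow> 'g \<Rightarrow> 'g \<Rightarrow> bool" where
  "ncg_adj G mul u v \<longleftrightarrow> u \<in> ncg_vertices G mul \<and> v \<in> ncg_vertices G mul \<and> u \<noteq> v
     \<and> mul u v \<noteq> mul v u"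

definition is_walk :: "'v set \<Rightarrow> ('v \<Rightarrow> 'v \<Rightarrow> bool) \<Rightarrow> 'v list \<Rightarrow> bool" where
  "is_walk V E xs \<longleftrightarrow> xs \<noteq> [] \<and> set xs \<subseteq> V \<and> (\<forall>i. Suc i < length xs \<longrightarrow> E (xs ! i) (xs ! Suc i))"

text \<open>Shortest path length (meaningful for connected graphs).\<close>
definition gdist :: "'v set \<Rightarrow> ('v \<Rightarrow> 'v \<Rightarrow> bool) \<Rightarrow> 'v \<Rightarrow> 'v \<Rightarrow> nat" where
  "gdist V E u v = (LEAST k. \<exists>xs. is_walk V E xs \<and> hd xs = u \<and> last xs = v \<and> length xs = Suc k)"

definition transmission :: "'v set \<Rightarrow> ('v \<Rightarrow> 'v \<Rightarrow> bool) \<Rightarrow> 'v \<Rightarrow> nat" where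
  "transmission V E v = (\<Sum>u\<in>V. gdist V E u v)"

text \<open>D^Q = Tr + D, as a matrix with respect to an enumeration f of the vertices.\<close>
definition dist_signless_laplacian ::
  "'v set \<Rightarrow> ('v \<Rightarrow> 'v \<Rightarrow> bool) \<Rightarrow> (nat \<Rightarrow> 'v) \<Rightarrow> real mat" where
  "dist_signless_laplacian V E f = mat (card V) (card V)
     (\<lambda>(i,j). (if i = j then real (transmission V E (f i)) else 0) + real (gdist V E (f i) (f j)))"

text \<open>Element (i,j) represents a^i b^j with 0 \<le> i < 4, 0 \<le> j < 2n.
  Since b^j a^k b^-j = a^((-1)^j k), (a^i b^j)(a^k b^l) = a^(i + (-1)^j k) b^(j+l).\<close>
definition M8n_carrier :: "nat \<Rightarrow> (nat \<times> nat) set" where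
  "M8n_carrier n = {0..<4} \<times> {0..<2*n}"

definition M8n_mult :: "nat \<Rightarrow> nat \<times> nat \<Rightarrow> nat \<times> nat \<Rightarrow> nat \<times> nat" where
  "M8n_mult n x y = (case x of (i, j) \<Rightarrow> case y of (k, l) \<Rightarrow>
     ((if even j then i + k else i + 3 * k) mod 4, (j + l) mod (2 * n)))"

end

theory Submission
  imports Defs
begin


lemma sylvester_det:
  fixes U :: "'a::idom mat"
  assumes U: "U \<in> carrier_mat N k" and V: "V \<in> carrier_mat k N"
  shows "det (1\<^sub>m N - U * V) = det (1\<^sub>m k - V * U)"
proof -
  define X where "X = four_block_mat (1\<^sub>m N) U V (1\<^sub>m k)"
  define Y where "Y = four_block_mat (1\<^sub>m N) (0\<^sub>m N k) (- V) (1\<^sub>m k)"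
  have Xc: "X \<in> carrier_mat (N+k) (N+k)" unfolding X_def using U V by auto
  have Yc: "Y \<in> carrier_mat (N+k) (N+k)" unfolding Y_def using U V by auto
  have detY: "det Y = 1" unfolding Y_def
    by (subst det_four_block_mat_upper_right_zero[where n=N and m=k], insert V, auto)
  have mVU: "- V * U = - (V * U)" using U V by auto
  have mV1: "- V * 1\<^sub>m N = - V" using V by auto
  have VU: "V * U \<in> carrier_mat k k" using U V by auto
  have UV: "U * V \<in> carrier_mat N N" using U V by auto
  have e1: "- V + V = 0\<^sub>m k N" using V by (intro eq_matI, auto)
  have e2: "- (V * U) + 1\<^sub>m k = 1\<^sub>m k - V * U" using U V by (intro eq_matI, auto)
  have e3: "V + - V = 0\<^sub>m k N" using V by (intro eq_matI, auto)
  have e4: "1\<^sub>m N + - (U * V) = 1\<^sub>m N - U * V" using U V by (intro eq_matI, auto)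
  have "Y * X = four_block_mat (1\<^sub>m N) U (0\<^sub>m k N) (1\<^sub>m k - V * U)"
    unfolding X_def Y_def
    apply (subst mult_four_block_mat[of _ N N _ k _ k _ _ N _ k])
    using U V mVU mV1 e1 e2 by simp_all
  hence "det (Y * X) = det (1\<^sub>m k - V * U)"
    by (simp, subst det_four_block_mat_lower_left_zero[where n=N and m=k], insert U V, auto)
  hence d1: "det X = det (1\<^sub>m k - V * U)" using det_mult[OF Yc Xc] detY by simp
  have "X * Y = four_block_mat (1\<^sub>m N - U * V) U (0\<^sub>m k N) (1\<^sub>m k)"
    unfolding X_def Y_def
    apply (subst mult_four_block_mat[of _ N N _ k _ k _ _ N _ k])
    using U V e3 e4 by simp_all
  hence "det (X * Y) = det (1\<^sub>m N - U * V)"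
    by (simp, subst det_four_block_mat_lower_left_zero[where n=N and m=k], insert U V, auto)
  hence "det X = det (1\<^sub>m N - U * V)" using det_mult[OF Xc Yc] detY by simp
  with d1 show ?thesis by simp
qed

lemma det_main:
  fixes U V :: "real mat" and m y :: real
  assumes U: "U \<in> carrier_mat N 3" and V: "V \<in> carrier_mat 3 N"
    and VU: "V * U = mat 3 3 (\<lambda>(c,d). m * (if c = d then 2 else 1))"
    and y0: "y \<noteq> 0" and ym: "y \<noteq> m" and N3: "3 \<le> N"
  shows "det (y \<cdot>\<^sub>m 1\<^sub>m N - U * V) = y ^ (N - 3) * (y - m) ^ 2 * (y - 4 * m)"
proof -
  have U': "(1/y) \<cdot>\<^sub>m U \<in> carrier_mat N 3" using U by simp
  have e1: "y \<cdot>\<^sub>m 1\<^sub>m N - U * V = y \<cdot>\<^sub>m (1\<^sub>m N - ((1/y) \<cdot>\<^sub>m U) * V)"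
    unfolding mult_smult_assoc_mat[OF U V]
    using U V y0 by (intro eq_matI, auto simp: field_simps)
  have "det (1\<^sub>m N - ((1/y) \<cdot>\<^sub>m U) * V) = det (1\<^sub>m 3 - V * ((1/y) \<cdot>\<^sub>m U))"
    by (rule sylvester_det[OF U' V])
  also have "V * ((1/y) \<cdot>\<^sub>m U) = (1/y) \<cdot>\<^sub>m (V * U)"
    by (rule mult_smult_distrib[OF V U])
  also have "1\<^sub>m 3 - (1/y) \<cdot>\<^sub>m (V * U) = (1 - m/y) \<cdot>\<^sub>m (1\<^sub>m 3 -
      mat 3 1 (\<lambda>_. m / (y - m)) * mat 1 3 (\<lambda>_. 1))"
    unfolding VU using y0 ym
    by (intro eq_matI, auto simp: scalar_prod_def field_simps)
  also have "det \<dots> = (1 - m/y) ^ 3 * det (1\<^sub>m 1 - mat 1 3 (\<lambda>_. 1) * mat 3 1 (\<lambda>_. m / (y - m)))"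
    by (subst det_smult, simp, subst sylvester_det[of _ 3 1], auto)
  also have "det (1\<^sub>m 1 - mat 1 3 (\<lambda>_. 1) * mat 3 1 (\<lambda>_. m / (y - m))) = 1 - 3 * m / (y - m)"
    by (subst det_single, auto simp: scalar_prod_def numeral_3_eq_3)
  finally have d: "det (1\<^sub>m N - ((1/y) \<cdot>\<^sub>m U) * V) = (1 - m/y) ^ 3 * (1 - 3 * m / (y - m))" .
  have "det (y \<cdot>\<^sub>m 1\<^sub>m N - U * V) = y ^ N * ((1 - m/y) ^ 3 * (1 - 3 * m / (y - m)))"
    unfolding e1 using d U V by (subst det_smult, simp)
  also have "y ^ N = y ^ (N - 3) * y ^ 3" using N3 by (simp flip: power_add)
  also have "1 - m/y = (y - m) / y" using y0 by (simp add: field_simps)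
  also have "1 - 3 * m / (y - m) = (y - 4 * m) / (y - m)" using ym by (simp add: field_simps)
  also have "y ^ (N - 3) * y ^ 3 * (((y - m) / y) ^ 3 * ((y - 4 * m) / (y - m)))
     = y ^ (N - 3) * (y ^ 3 / y ^ 3) * ((y - m) ^ 3 / (y - m)) * (y - 4 * m)"
    by (simp add: power_divide)
  also have "\<dots> = y ^ (N - 3) * (y - m) ^ 2 * (y - 4 * m)"
    using y0 ym by (simp add: power3_eq_cube power2_eq_square)
  finally show ?thesis .
qed



lemma gdist_refl:
  assumes "u \<in> V" shows "gdist V E u u = 0"
  unfolding gdist_def
  by (rule Least_eq_0, rule exI[of _ "[u]"], use assms in \<open>auto simp: is_walk_def\<close>)

lemma walk_len1: "length xs = Suc 0 \<Longrightarrow> hd xs = last xs"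
  by (cases xs, auto)

lemma gdist_one:
  assumes "u \<in> V" "v \<in> V" "u \<noteq> v" "E u v"
  shows "gdist V E u v = 1"
  unfolding gdist_def
proof (rule Least_equality)
  show "\<exists>xs. is_walk V E xs \<and> hd xs = u \<and> last xs = v \<and> length xs = Suc 1"
    by (rule exI[of _ "[u,v]"], use assms in \<open>auto simp: is_walk_def less_Suc_eq\<close>)
next
  fix y assume "\<exists>xs. is_walk V E xs \<and> hd xs = u \<and> last xs = v \<and> length xs = Suc y"
  then obtain xs where "hd xs = u" "last xs = v" "length xs = Suc y" by blast
  then show "1 \<le> y" using assms(3) walk_len1 by (cases y) auto
qed

lemma gdist_two:
  assumes "u \<in> V" "v \<in> V" "w \<in> V" "u \<noteq> v" "\<not> E u v" "E u w" "E w v"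
  shows "gdist V E u v = 2"
  unfolding gdist_def
proof (rule Least_equality)
  show "\<exists>xs. is_walk V E xs \<and> hd xs = u \<and> last xs = v \<and> length xs = Suc 2"
    by (rule exI[of _ "[u,w,v]"], use assms in \<open>auto simp: is_walk_def less_Suc_eq\<close>)
next
  fix y assume "\<exists>xs. is_walk V E xs \<and> hd xs = u \<and> last xs = v \<and> length xs = Suc y"
  then obtain xs where xs: "is_walk V E xs" "hd xs = u" "last xs = v" "length xs = Suc y" by blast
  show "2 \<le> y"
  proof (rule ccontr)
    assume "\<not> 2 \<le> y"
    hence "y = 0 \<or> y = 1" by auto
    thus False
    proof
      assume "y = 0" thus False using xs assms(4) walk_len1 by auto
    next
      assume y1: "y = 1"
      then obtain a b where ab: "xs = [a, b]" using xs(4)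
        by (cases xs; cases "tl xs"; auto)
      have "E (xs ! 0) (xs ! Suc 0)" using xs(1) xs(4) y1 unfolding is_walk_def by auto
      thus False using ab xs(2,3) assms(5) by auto
    qed
  qed
qed

definition cls :: "nat \<times> nat \<Rightarrow> nat" where
  "cls u = (case u of (i, j) \<Rightarrow> if even j then 0 else if even i then 1 else 2)"

lemma lt4_cases: "(i::nat) < 4 \<Longrightarrow> i = 0 \<or> i = 1 \<or> i = 2 \<or> i = 3" by auto

lemma centre_M8n:
  assumes "n \<ge> 1"
  shows "centre (M8n_carrier n) (M8n_mult n) = {(i,j). i < 4 \<and> j < 2*n \<and> even i \<and> even j}"
proof (rule Set.set_eqI, rule iffI)
  fix u :: "nat \<times> nat" assume u: "u \<in> centre (M8n_carrier n) (M8n_mult n)"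
  obtain i j where uij: "u = (i,j)" by (cases u)
  have c: "i < 4" "j < 2*n" using u uij unfolding centre_def M8n_carrier_def by auto
  have a: "(1,0) \<in> M8n_carrier n" "(0,1) \<in> M8n_carrier n" using assms unfolding M8n_carrier_def by auto
  have "M8n_mult n u (1,0) = M8n_mult n (1,0) u" "M8n_mult n u (0,1) = M8n_mult n (0,1) u"
    using u a unfolding centre_def by auto
  hence "even i \<and> even j" using c lt4_cases[OF c(1)] unfolding uij M8n_mult_def
    by (auto split: if_splits)
  thus "u \<in> {(i,j). i < 4 \<and> j < 2*n \<and> even i \<and> even j}" using c uij by auto
next
  fix u :: "nat \<times> nat" assume u: "u \<in> {(i,j). i < 4 \<and> j < 2*n \<and> even i \<and> even j}"
  then obtain i j where uij: "u = (i,j)" and c: "i < 4" "j < 2*n" "even i" "even j" by auto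
  show "u \<in> centre (M8n_carrier n) (M8n_mult n)"
    unfolding centre_def
  proof (intro CollectI conjI ballI)
    show "u \<in> M8n_carrier n" using c uij unfolding M8n_carrier_def by auto
  next
    fix x assume "x \<in> M8n_carrier n"
    then obtain k l where x: "x = (k,l)" "k < 4" by (cases x, auto simp: M8n_carrier_def)
    show "M8n_mult n u x = M8n_mult n x u"
      using c lt4_cases[OF c(1)] lt4_cases[OF x(2)] unfolding uij x M8n_mult_def
      by (auto simp: add.commute)
  qed
qed

lemma V_eq:
  assumes "n \<ge> 1"
  shows "ncg_vertices (M8n_carrier n) (M8n_mult n) = {(i,j). i < 4 \<and> j < 2*n \<and> \<not> (even i \<and> even j)}"
  unfolding ncg_vertices_def centre_M8n[OF assms] by (auto simp: M8n_carrier_def)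

lemma comm_iff:
  assumes "n \<ge> 1" "u \<in> ncg_vertices (M8n_carrier n) (M8n_mult n)"
    "v \<in> ncg_vertices (M8n_carrier n) (M8n_mult n)"
  shows "M8n_mult n u v = M8n_mult n v u \<longleftrightarrow> cls u = cls v"
proof -
  obtain i j where u: "u = (i,j)" "i < 4" "\<not> (even i \<and> even j)" using assms(2) V_eq[OF assms(1)] by auto
  obtain k l where v: "v = (k,l)" "k < 4" "\<not> (even k \<and> even l)" using assms(3) V_eq[OF assms(1)] by auto
  show ?thesis
    using lt4_cases[OF u(2)] lt4_cases[OF v(2)] u(3) v(3) unfolding u v M8n_mult_def cls_def
    by (cases "even j"; cases "even l"; auto simp: add.commute)
qed

lemma cls_lt3: "cls u < 3" unfolding cls_def by (auto split: prod.splits)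

lemma card_evens: "card {j. j < 2*n \<and> even (j::nat)} = n"
proof -
  have "{j. j < 2*n \<and> even (j::nat)} = (\<lambda>k. 2*k) ` {..<n}" by (auto elim!: evenE)
  thus ?thesis by (simp add: card_image inj_on_def)
qed

lemma card_odds: "card {j. j < 2*n \<and> odd (j::nat)} = n"
proof -
  have "{j. j < 2*n \<and> odd (j::nat)} = (\<lambda>k. 2*k+1) ` {..<n}" by (auto elim!: oddE)
  thus ?thesis by (simp add: card_image inj_on_def)
qed

lemma odd_lt4: "(i::nat) < 4 \<Longrightarrow> odd i \<longleftrightarrow> i \<in> {1,3}" using lt4_cases by fastforce
lemma even_lt4: "(i::nat) < 4 \<Longrightarrow> even i \<longleftrightarrow> i \<in> {0,2}" using lt4_cases by fastforce

lemma o4: "((i::nat) < 4 \<and> odd i) \<longleftrightarrow> (i = 1 \<or> i = 3)"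
  by (cases "i < 4") (auto dest: lt4_cases)
lemma e4: "((i::nat) < 4 \<and> even i) \<longleftrightarrow> (i = 0 \<or> i = 2)"
  by (cases "i < 4") (auto dest: lt4_cases)

lemma class_sets:
  assumes "n \<ge> 1"
  shows "{u \<in> ncg_vertices (M8n_carrier n) (M8n_mult n). cls u = 0} = {1,3} \<times> {j. j < 2*n \<and> even j}"
    "{u \<in> ncg_vertices (M8n_carrier n) (M8n_mult n). cls u = 1} = {0,2} \<times> {j. j < 2*n \<and> odd j}"
    "{u \<in> ncg_vertices (M8n_carrier n) (M8n_mult n). cls u = 2} = {1,3} \<times> {j. j < 2*n \<and> odd j}"
proof -
  have c: "\<And>i j. cls (i,j) = (if even j then 0 else if even i then 1 else 2)" by (simp add: cls_def)
  show "{u \<in> ncg_vertices (M8n_carrier n) (M8n_mult n). cls u = 0} = {1,3} \<times> {j. j < 2*n \<and> even j}"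
  proof (rule Set.set_eqI)
    fix u :: "nat \<times> nat" obtain i j where u: "u = (i,j)" by (cases u)
    show "u \<in> {u \<in> ncg_vertices (M8n_carrier n) (M8n_mult n). cls u = 0} \<longleftrightarrow> u \<in> {1,3} \<times> {j. j < 2*n \<and> even j}"
      unfolding u V_eq[OF assms] mem_Collect_eq c case_prod_conv mem_Sigma_iff insert_iff empty_iff
      using o4[of i] by (cases "even j"; cases "even i"; simp)
  qed
  show "{u \<in> ncg_vertices (M8n_carrier n) (M8n_mult n). cls u = 1} = {0,2} \<times> {j. j < 2*n \<and> odd j}"
  proof (rule Set.set_eqI)
    fix u :: "nat \<times> nat" obtain i j where u: "u = (i,j)" by (cases u)
    show "u \<in> {u \<in> ncg_vertices (M8n_carrier n) (M8n_mult n). cls u = 1} \<longleftrightarrow> u \<in> {0,2} \<times> {j. j < 2*n \<and> odd j}"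
      unfolding u V_eq[OF assms] mem_Collect_eq c case_prod_conv mem_Sigma_iff insert_iff empty_iff
      using e4[of i] by (cases "even j"; cases "even i"; simp)
  qed
  show "{u \<in> ncg_vertices (M8n_carrier n) (M8n_mult n). cls u = 2} = {1,3} \<times> {j. j < 2*n \<and> odd j}"
  proof (rule Set.set_eqI)
    fix u :: "nat \<times> nat" obtain i j where u: "u = (i,j)" by (cases u)
    show "u \<in> {u \<in> ncg_vertices (M8n_carrier n) (M8n_mult n). cls u = 2} \<longleftrightarrow> u \<in> {1,3} \<times> {j. j < 2*n \<and> odd j}"
      unfolding u V_eq[OF assms] mem_Collect_eq c case_prod_conv mem_Sigma_iff insert_iff empty_iff
      using o4[of i] by (cases "even j"; cases "even i"; simp)
  qed
qed

lemma class_card: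
  assumes "n \<ge> 1" "d < 3"
  shows "card {u \<in> ncg_vertices (M8n_carrier n) (M8n_mult n). cls u = d} = 2 * n"
proof -
  have "d = 0 \<or> d = 1 \<or> d = 2" using assms(2) by auto
  thus ?thesis
  proof (elim disjE)
    assume dd: "d = 0" show ?thesis unfolding dd class_sets(1)[OF assms(1)] card_cartesian_product card_evens by simp
  next
    assume dd: "d = 1" show ?thesis unfolding dd class_sets(2)[OF assms(1)] card_cartesian_product card_odds by simp
  next
    assume dd: "d = 2" show ?thesis unfolding dd class_sets(3)[OF assms(1)] card_cartesian_product card_odds by simp
  qed
qed

lemma V_card:
  assumes "n \<ge> 1"
  shows "card (ncg_vertices (M8n_carrier n) (M8n_mult n)) = 6 * n"
proof -
  let ?V = "ncg_vertices (M8n_carrier n) (M8n_mult n)"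
  let ?C = "\<lambda>d. {u \<in> ?V. cls u = d}"
  have fin: "finite ?V" unfolding V_eq[OF assms] by (rule finite_subset[of _ "{..<4} \<times> {..<2*n}"], auto)
  have "?V = ?C 0 \<union> (?C 1 \<union> ?C 2)"
  proof (rule Set.set_eqI)
    fix u show "u \<in> ?V \<longleftrightarrow> u \<in> ?C 0 \<union> (?C 1 \<union> ?C 2)"
      using cls_lt3[of u] by (cases "cls u = 0"; cases "cls u = 1"; auto)
  qed
  have finC: "\<And>d. finite (?C d)" using fin by simp
  have dj: "\<And>d e. d \<noteq> e \<Longrightarrow> ?C d \<inter> ?C e = {}" by blast
  from \<open>?V = _\<close> have e: "card ?V = card (?C 0 \<union> (?C 1 \<union> ?C 2))" by (rule arg_cong)
  have a: "card (?C 1 \<union> ?C 2) = card (?C 1) + card (?C 2)"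
    by (rule card_Un_disjoint[OF finC[of 1] finC[of 2] dj], simp)
  have b: "card (?C 0 \<union> (?C 1 \<union> ?C 2)) = card (?C 0) + card (?C 1 \<union> ?C 2)"
    by (rule card_Un_disjoint[OF finC[of 0] finite_UnI[OF finC[of 1] finC[of 2]]]) (unfold Int_Un_distrib, use dj[of 0 1] dj[of 0 2] in simp)
  have "card ?V = card (?C 0) + (card (?C 1) + card (?C 2))" using e a b by simp
  thus ?thesis using class_card[OF assms] by simp
qed

lemma adj_iff:
  assumes "n \<ge> 1"
  shows "ncg_adj (M8n_carrier n) (M8n_mult n) u v \<longleftrightarrow>
    u \<in> ncg_vertices (M8n_carrier n) (M8n_mult n) \<and> v \<in> ncg_vertices (M8n_carrier n) (M8n_mult n) \<and> cls u \<noteq> cls v"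
  unfolding ncg_adj_def using comm_iff[OF assms] by blast

definition rep :: "nat \<Rightarrow> nat \<times> nat" where
  "rep d = (if d = 0 then (1,0) else if d = 1 then (0,1) else (1,1))"

lemma rep_props:
  assumes "n \<ge> 1" "d < 3"
  shows "rep d \<in> ncg_vertices (M8n_carrier n) (M8n_mult n)" "cls (rep d) = d"
  using assms unfolding V_eq[OF assms(1)] rep_def cls_def by auto

lemma gdist_M:
  assumes "n \<ge> 1" "u \<in> ncg_vertices (M8n_carrier n) (M8n_mult n)" "v \<in> ncg_vertices (M8n_carrier n) (M8n_mult n)"
  shows "gdist (ncg_vertices (M8n_carrier n) (M8n_mult n)) (ncg_adj (M8n_carrier n) (M8n_mult n)) u v
    = (if u = v then 0 else if cls u = cls v then 2 else 1)"
proof -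
  consider "u = v" | "u \<noteq> v" "cls u = cls v" | "cls u \<noteq> cls v" by blast
  thus ?thesis
  proof cases
    case 1 thus ?thesis using gdist_refl assms by simp
  next
    case 2
    let ?w = "rep ((cls u + 1) mod 3)"
    have w: "?w \<in> ncg_vertices (M8n_carrier n) (M8n_mult n)" "cls ?w = (cls u + 1) mod 3"
      using rep_props[OF assms(1)] by auto
    have "cls ?w \<noteq> cls u" using w(2) cls_lt3[of u] by (auto simp: mod_Suc)
    hence "gdist (ncg_vertices (M8n_carrier n) (M8n_mult n)) (ncg_adj (M8n_carrier n) (M8n_mult n)) u v = 2"
      using 2 w assms by (intro gdist_two[where w = ?w]) (auto simp: adj_iff[OF assms(1)])
    thus ?thesis using 2 by simp
  next
    case 3
    thus ?thesis using assms by (subst gdist_one) (auto simp: adj_iff[OF assms(1)])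
  qed
qed

lemma trans_M:
  assumes "n \<ge> 1" "v \<in> ncg_vertices (M8n_carrier n) (M8n_mult n)"
  shows "transmission (ncg_vertices (M8n_carrier n) (M8n_mult n)) (ncg_adj (M8n_carrier n) (M8n_mult n)) v
    = 8 * n - 2"
proof -
  let ?V = "ncg_vertices (M8n_carrier n) (M8n_mult n)"
  let ?h = "\<lambda>u. 1 + (if cls u = cls v then 1 else 0) :: nat"
  have fin: "finite ?V" unfolding V_eq[OF assms(1)] by (rule finite_subset[of _ "{..<4} \<times> {..<2*n}"], auto)
  have "transmission ?V (ncg_adj (M8n_carrier n) (M8n_mult n)) v = (\<Sum>u\<in>?V. (if u = v then 0 else if cls u = cls v then 2 else 1))"
    unfolding transmission_def using gdist_M[OF assms(1) _ assms(2)] by (intro sum.cong) auto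
  also have "\<dots> = (\<Sum>u\<in>?V - {v}. (if u = v then 0 else if cls u = cls v then 2 else 1))"
    by (simp add: sum.remove[OF fin assms(2)])
  also have "\<dots> = (\<Sum>u\<in>?V - {v}. ?h u)" by (intro sum.cong) auto
  finally have t: "transmission ?V (ncg_adj (M8n_carrier n) (M8n_mult n)) v = (\<Sum>u\<in>?V - {v}. ?h u)" .
  have "(\<Sum>u\<in>?V. ?h u) = 2 + (\<Sum>u\<in>?V - {v}. ?h u)"
    by (simp add: sum.remove[OF fin assms(2)])
  moreover have "(\<Sum>u\<in>?V. ?h u) = card ?V + card {u \<in> ?V. cls u = cls v}"
  proof -
    have "(\<Sum>u\<in>?V. ?h u) = (\<Sum>u\<in>?V. 1) + (\<Sum>u\<in>?V. (if cls u = cls v then 1 else 0))"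
      by (rule sum.distrib)
    also have "(\<Sum>u\<in>?V. (if cls u = cls v then 1 else 0)) = (\<Sum>u\<in>{u \<in> ?V. cls u = cls v}. (1::nat))"
      using fin by (rule sum.inter_filter[symmetric])
    finally show ?thesis by simp
  qed
  ultimately have "2 + (\<Sum>u\<in>?V - {v}. ?h u) = 6 * n + 2 * n"
    using V_card[OF assms(1)] class_card[OF assms(1) cls_lt3] by simp
  thus ?thesis unfolding t by linarith
qed



theorem theorem6p6:
  fixes n :: nat and f :: "nat \<Rightarrow> nat \<times> nat"
  assumes "n \<ge> 1"
    and "bij_betw f {0..<card (ncg_vertices (M8n_carrier n) (M8n_mult n))}
                    (ncg_vertices (M8n_carrier n) (M8n_mult n))"
  shows "char_poly (dist_signless_laplacian (ncg_vertices (M8n_carrier n) (M8n_mult n))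
                      (ncg_adj (M8n_carrier n) (M8n_mult n)) f)
       = [:- (8 * real n - 4), 1:] ^ (3 * (2 * n - 1))
         * [:- (10 * real n - 4), 1:] ^ 2
         * [:- (16 * real n - 4), 1:]"
proof -
  let ?V = "ncg_vertices (M8n_carrier n) (M8n_mult n)"
  let ?E = "ncg_adj (M8n_carrier n) (M8n_mult n)"
  define N where "N = card ?V"
  define A where "A = dist_signless_laplacian ?V ?E f"
  define P where "P = [:- (8 * real n - 4), 1:] ^ (3 * (2 * n - 1))
         * [:- (10 * real n - 4), 1:] ^ 2 * [:- (16 * real n - 4), 1:]"
  define c where "c = 8 * real n - 4"
  have N: "N = 6 * n" unfolding N_def by (rule V_card[OF assms(1)])
  have bij: "bij_betw f {0..<N} ?V" using assms(2) unfolding N_def .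
  have fV: "\<And>i. i < N \<Longrightarrow> f i \<in> ?V" using bij_betw_apply[OF bij] by auto
  have finj: "\<And>i j. i < N \<Longrightarrow> j < N \<Longrightarrow> f i = f j \<longleftrightarrow> i = j"
    using bij_betw_imp_inj_on[OF bij] unfolding inj_on_def by auto
  define U where "U = mat N 3 (\<lambda>(i,d). if cls (f i) = d then 1 else 0 :: real)"
  define W where "W = mat 3 N (\<lambda>(d,j). 1 + (if cls (f j) = d then 1 else 0) :: real)"
  have Uc: "U \<in> carrier_mat N 3" unfolding U_def by simp
  have Wc: "W \<in> carrier_mat 3 N" unfolding W_def by simp
  have Ac: "A \<in> carrier_mat N N" unfolding A_def dist_signless_laplacian_def N_def by simp
  have cls3: "\<And>u. cls u = 0 \<or> cls u = 1 \<or> cls u = 2" using cls_lt3 by (metis One_nat_def less_2_cases less_Suc_eq numeral_2_eq_2 numeral_3_eq_3)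
  have UW: "(U * W) $$ (i,j) = 1 + (if cls (f i) = cls (f j) then 1 else 0)" if "i < N" "j < N" for i j
  proof -
    have "(U * W) $$ (i,j) = (\<Sum>k\<in>{0,1,2}. (if cls (f i) = k then 1 else 0) * (1 + (if cls (f j) = k then 1 else 0)))"
      using that Uc Wc unfolding U_def W_def
      by (simp add: scalar_prod_def numeral_3_eq_3 atLeast0LessThan lessThan_Suc insert_commute)
    also have "\<dots> = 1 + (if cls (f i) = cls (f j) then 1 else 0)"
      using cls3[of "f i"] by auto
    finally show ?thesis .
  qed
  have Aent: "A $$ (i,j) = (if i = j then c else 0) + (U * W) $$ (i,j)" if "i < N" "j < N" for i j
  proof -
    have "A $$ (i,j) = (if i = j then real (transmission ?V ?E (f i)) else 0) + real (gdist ?V ?E (f i) (f j))"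
      using that unfolding A_def dist_signless_laplacian_def N_def by simp
    also have "\<dots> = (if i = j then c else 0) + (U * W) $$ (i,j)"
      using that assms(1) unfolding UW[OF that] trans_M[OF assms(1) fV[OF that(1)]]
        gdist_M[OF assms(1) fV[OF that(1)] fV[OF that(2)]] finj[OF that] c_def
      by (auto simp: of_nat_diff)
    finally show ?thesis .
  qed
  have WU: "W * U = mat 3 3 (\<lambda>(a,b). (2 * real n) * (if a = b then 2 else 1))"
  proof (rule eq_matI)
    fix a b assume ab: "a < dim_row (mat 3 3 (\<lambda>(a,b). (2 * real n) * (if a = b then 2 else 1) :: real))"
      "b < dim_col (mat 3 3 (\<lambda>(a,b). (2 * real n) * (if a = b then 2 else 1) :: real))"
    hence ab3: "a < 3" "b < 3" by auto
    define g where "g u = (1 + (if cls u = a then 1 else 0)) * (if cls u = b then 1 else 0 :: real)" for u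
    have "(W * U) $$ (a,b) = (\<Sum>j\<in>{0..<N}. g (f j))"
      using ab3 Uc Wc unfolding U_def W_def g_def by (simp add: scalar_prod_def)
    also have "\<dots> = (\<Sum>u\<in>?V. g u)" by (rule sum.reindex_bij_betw[OF bij])
    also have "\<dots> = (\<Sum>u\<in>?V. if cls u = b then (1 + (if b = a then 1 else 0)) else 0)"
      unfolding g_def by (rule sum.cong) auto
    also have "\<dots> = (\<Sum>u\<in>{u\<in>?V. cls u = b}. (1 + (if b = a then 1 else 0)))"
      by (rule sum.inter_filter[symmetric], rule finite_subset[of _ "{..<4} \<times> {..<2*n}"]) (auto simp: V_eq[OF assms(1)])
    also have "\<dots> = real (2 * n) * (1 + (if b = a then 1 else 0))"
      using class_card[OF assms(1) ab3(2)] by simp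
    finally show "(W * U) $$ (a,b) = mat 3 3 (\<lambda>(a,b). (2 * real n) * (if a = b then 2 else 1)) $$ (a,b)"
      using ab3 by auto
  qed (use Uc Wc in auto)
  have key: "poly (char_poly A) x = poly P x" if x1: "x - c \<noteq> 0" and x2: "x - c \<noteq> 2 * real n" for x
  proof -
    have "poly (char_poly A) x = det (- char_matrix A x)" by (rule char_poly_matrix[OF Ac])
    also have "- char_matrix A x = (x - c) \<cdot>\<^sub>m 1\<^sub>m N - U * W"
      using Ac Uc Wc Aent unfolding char_matrix_def by (intro eq_matI) (auto simp: algebra_simps)
    also have "det \<dots> = (x - c) ^ (N - 3) * ((x - c) - 2 * real n) ^ 2 * ((x - c) - 4 * (2 * real n))"
      by (rule det_main[OF Uc Wc WU x1 x2]) (use assms(1) in \<open>simp add: N\<close>)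
    also have "\<dots> = poly P x"
      unfolding P_def c_def N using assms(1)
      by (simp add: algebra_simps)
    finally show ?thesis .
  qed
  have "char_poly A = P"
  proof (rule ccontr)
    assume ne: "char_poly A \<noteq> P"
    hence "finite {x. poly (char_poly A - P) x = 0}" by (intro poly_roots_finite) simp
    moreover have "UNIV - {c, c + 2 * real n} \<subseteq> {x. poly (char_poly A - P) x = 0}" using key by auto
    ultimately have "finite (UNIV - {c, c + 2 * real n})" by (rule finite_subset[rotated])
    moreover have "infinite (UNIV - {c, c + 2 * real n})"
      by (rule Diff_infinite_finite) (auto simp: infinite_UNIV_char_0)
    ultimately show False by simp
  qed
  thus ?thesis unfolding A_def P_def .
qed

end
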